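(* Let $\mathcal{Q}\subset\mathbb{R}^n$ be compact and let $(\mathcal{E},\mathcal{D})$ be a compression code for $\mathcal{Q}$ operating at rate $r$ and distortion $\delta$, with codebook $\mathcal{C}$. Let $A\in\mathbb{R}^{d\times n}$ have i.i.d. $\mathcal{N}(0,1)$ entries. For ${\bf x}_o\in\mathcal{Q}$, let $\hat{{\bf x}}_o$ be the CSP reconstruction from ${\bf y}_o=A{\bf x}_o$, i.e. any $\hat{{\bf x}}_o\in\arg\min_{{\bf c}\in\mathcal{C}}\|{\bf y}_o-A{\bf c}\|_2^2$. Then for arbitrary $\tau_1>0$ and $\tau_2\in(0,1)$, \[ \|\hat{{\bf x}}_o-{\bf x}_o\|_2\le\delta\sqrt{\frac{1+\tau_1}{1-\tau_2}} \] with probability at least \[ 1-2^{r}{\rm e}^{\frac d2(\tau_2+\log(1-\tau_2))}-{\rm e}^{-\frac d2(\tau_1-\log(1+\tau_1))}. \]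
   Context: A compression code $(\mathcal{E},\mathcal{D})$ for $\mathcal{Q}$ at rate $r$ consists of an encoder $\mathcal{E}:\mathcal{Q}\to\{1,2,\dots,2^r\}$ and a decoder $\mathcal{D}:\{1,\dots,2^r\}\to\mathbb{R}^n$; its codebook is $\mathcal{C}=\{\mathcal{D}(\mathcal{E}({\bf x})):{\bf x}\in\mathcal{Q}\}$ (so $|\mathcal{C}|\le2^r$), and its distortion is $\delta=\sup_{{\bf x}\in\mathcal{Q}}\|{\bf x}-\mathcal{D}(\mathcal{E}({\bf x}))\|_2$. $\log$ denotes the natural logarithm. *)

theory Defs
  imports "HOL-Probability.Probability"
begin

text \<open>Law of a d x n matrix with i.i.d. standard Gaussian entries, modelled as the
  product measure over the index set of entries (row, column).\<close>
definition gauss_matrix :: "('d::finite \<times> 'n::finite \<Rightarrow> real) measure" where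
  "gauss_matrix = PiM UNIV (\<lambda>_. density lborel std_normal_density)"

definition mat_of :: "('d::finite \<times> 'n::finite \<Rightarrow> real) \<Rightarrow> real^'n^'d" where
  "mat_of f = (\<chi> i j. f (i, j))"

definition codebook :: "'a set \<Rightarrow> ('a \<Rightarrow> nat) \<Rightarrow> (nat \<Rightarrow> 'b) \<Rightarrow> 'b set" where
  "codebook Q E D = (\<lambda>x. D (E x)) ` Q"

definition distortion :: "('a::real_normed_vector) set \<Rightarrow> ('a \<Rightarrow> nat) \<Rightarrow> (nat \<Rightarrow> 'a) \<Rightarrow> real" where
  "distortion Q E D = (SUP x\<in>Q. norm (x - D (E x)))"

definition csp_minimizer :: "real^'n^'d \<Rightarrow> real^'d \<Rightarrow> (real^'n) set \<Rightarrow> real^'n \<Rightarrow> bool" where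
  "csp_minimizer A y C c \<longleftrightarrow> c \<in> C \<and> (\<forall>c'\<in>C. (norm (y - A *v c))\<^sup>2 \<le> (norm (y - A *v c'))\<^sup>2)"

end

theory Submission
  imports Defs
begin

abbreviation "N0 \<equiv> density lborel std_normal_density"

lemma prob_N0: "prob_space N0" by (rule prob_space_normal_density) simp

lemma sets_N0[simp, measurable_cong]: "sets N0 = sets borel" by simp

lemma prob_gauss: "prob_space (gauss_matrix :: ('d::finite \<times> 'n::finite \<Rightarrow> real) measure)"
  unfolding gauss_matrix_def by (intro prob_space_PiM prob_N0)

lemma norm_sq_mat: "(norm (mat_of f *v v))\<^sup>2 = (\<Sum>i\<in>UNIV. (\<Sum>j\<in>UNIV. f (i,j) * v $ j)\<^sup>2)"
  unfolding power2_norm_eq_inner inner_vec_def matrix_vector_mult_def mat_of_def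
  by (simp add: power2_eq_square)

lemma meas_Y[measurable]: "(\<lambda>f. (norm (mat_of f *v v))\<^sup>2) \<in> borel_measurable (gauss_matrix :: ('d::finite \<times> 'n::finite \<Rightarrow> real) measure)"
  unfolding norm_sq_mat gauss_matrix_def by measurable

lemma coord_indep:
  "prob_space.indep_vars (gauss_matrix::('d::finite\<times>'n::finite\<Rightarrow>real) measure) (\<lambda>_. N0) (\<lambda>k f. f k) UNIV"
proof -
  interpret prob_space "gauss_matrix::('d::finite\<times>'n::finite\<Rightarrow>real) measure" by (rule prob_gauss)
  have rv: "\<And>k. random_variable N0 (\<lambda>f::'d\<times>'n\<Rightarrow>real. f k)"
    unfolding gauss_matrix_def by (rule measurable_component_singleton) simp
  have comp: "\<And>k. distr (gauss_matrix::('d::finite\<times>'n::finite\<Rightarrow>real) measure) N0 (\<lambda>f. f k) = N0"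
    unfolding gauss_matrix_def by (rule distr_PiM_component) (auto intro: prob_N0)
  show ?thesis
    apply (subst indep_vars_iff_distr_eq_PiM[OF _ rv])
     apply simp
    apply (simp add: comp)
    apply (simp add: gauss_matrix_def[symmetric] distr_id restrict_UNIV[abs_def])
    done
qed

lemma coord_distr:
  "distributed (gauss_matrix::('d::finite\<times>'n::finite\<Rightarrow>real) measure) lborel (\<lambda>f. f k) (\<lambda>x. ennreal (std_normal_density x))"
proof -
  have comp: "distr (gauss_matrix::('d::finite\<times>'n::finite\<Rightarrow>real) measure) N0 (\<lambda>f. f k) = N0"
    unfolding gauss_matrix_def by (rule distr_PiM_component) (auto intro: prob_N0)
  have "distr (gauss_matrix::('d::finite\<times>'n::finite\<Rightarrow>real) measure) lborel (\<lambda>f. f k)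
      = distr (gauss_matrix::('d::finite\<times>'n::finite\<Rightarrow>real) measure) N0 (\<lambda>f. f k)"
    by (rule distr_cong) auto
  then show ?thesis unfolding distributed_def using comp
    by (simp add: gauss_matrix_def)
qed

lemma row_distr:
  fixes v :: "real^'n::finite" and i :: "'d::finite"
  assumes "v \<noteq> 0"
  shows "distributed (gauss_matrix::('d\<times>'n\<Rightarrow>real) measure) lborel
           (\<lambda>f. \<Sum>j\<in>UNIV. f (i,j) * v $ j) (\<lambda>x. ennreal (normal_density 0 (norm v) x))"
proof -
  interpret prob_space "gauss_matrix::('d\<times>'n\<Rightarrow>real) measure" by (rule prob_gauss)
  define J where "J = {j. v $ j \<noteq> 0}"
  have J: "finite J" "J \<noteq> {}" using assms unfolding J_def by (auto simp: vec_eq_iff)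
  have ind1: "indep_vars (\<lambda>j. PiM {(i,j)} (\<lambda>_. N0)) (\<lambda>j f. restrict f {(i,j)}) J"
    using indep_vars_restrict[OF coord_indep[where 'd='d and 'n='n], of J "\<lambda>j. {(i,j)}"]
    by (auto simp: disjoint_family_on_def)
  have ind: "indep_vars (\<lambda>_. borel) (\<lambda>j f. v $ j * f (i,j)) J"
    using indep_vars_compose2[OF ind1, where Y="\<lambda>j g. v $ j * g (i,j)" and N="\<lambda>_. borel"]
    by (auto)
  have dj: "distributed (gauss_matrix::('d\<times>'n\<Rightarrow>real) measure) lborel (\<lambda>f. v $ j * f (i,j))
        (\<lambda>x. ennreal (normal_density 0 \<bar>v $ j\<bar> x))" if "j \<in> J" for j
    using normal_density_affine[OF coord_distr[where k="(i,j)"], of "v $ j" 0] that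
    by (simp add: J_def)
  have "distributed (gauss_matrix::('d\<times>'n\<Rightarrow>real) measure) lborel (\<lambda>f. \<Sum>j\<in>J. v $ j * f (i,j))
        (\<lambda>x. ennreal (normal_density (\<Sum>j\<in>J. 0) (sqrt (\<Sum>j\<in>J. \<bar>v $ j\<bar>\<^sup>2)) x))"
    by (rule sum_indep_normal[OF J ind]) (use dj in \<open>auto simp: J_def\<close>)
  moreover have "(\<lambda>f. \<Sum>j\<in>J. v $ j * f (i,j)) = (\<lambda>f. \<Sum>j\<in>UNIV. f (i,j) * v $ j)"
    by (rule ext, rule sum.mono_neutral_cong_left) (auto simp: J_def)
  moreover have "sqrt (\<Sum>j\<in>J. \<bar>v $ j\<bar>\<^sup>2) = norm v"
    unfolding norm_vec_def L2_set_def
    by (rule arg_cong[where f=sqrt], rule sum.mono_neutral_cong_left) (auto simp: J_def)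
  ultimately show ?thesis by simp
qed

lemma gauss_pointwise:
  fixes \<sigma> t x :: real
  assumes s: "\<sigma> > 0" and a: "1 - 2*t*\<sigma>\<^sup>2 > 0"
  shows "normal_density 0 \<sigma> x * exp (t * x\<^sup>2)
       = (1 / sqrt (1 - 2*t*\<sigma>\<^sup>2)) * normal_density 0 (\<sigma> / sqrt (1 - 2*t*\<sigma>\<^sup>2)) x"
proof -
  define a where "a = 1 - 2*t*\<sigma>\<^sup>2"
  have a0: "a > 0" using a by (simp add: a_def)
  have sq: "(\<sigma> / sqrt a)\<^sup>2 = \<sigma>\<^sup>2 / a" using a0 by (simp add: power_divide)
  have e: "-(x\<^sup>2)/(2*\<sigma>\<^sup>2) + t * x\<^sup>2 = -(x - 0)\<^sup>2 / (2 * (\<sigma>\<^sup>2/a))"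
    using a0 s by (simp add: a_def field_simps)
  have r: "sqrt a * sqrt (2 * pi * (\<sigma>\<^sup>2 / a)) = sqrt (2*pi*\<sigma>\<^sup>2)"
    using a0 by (simp add: real_sqrt_mult[symmetric])
  have "(1 / sqrt a) * normal_density 0 (\<sigma> / sqrt a) x
      = (1 / (sqrt a * sqrt (2 * pi * (\<sigma>\<^sup>2 / a)))) * exp (-(x - 0)\<^sup>2 / (2 * (\<sigma>\<^sup>2/a)))"
    unfolding normal_density_def sq by simp
  also have "\<dots> = 1 / sqrt (2*pi*\<sigma>\<^sup>2) * exp (-(x\<^sup>2)/(2*\<sigma>\<^sup>2) + t * x\<^sup>2)"
    unfolding r e ..
  also have "\<dots> = normal_density 0 \<sigma> x * exp (t * x\<^sup>2)"
    unfolding normal_density_def exp_add by simp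
  finally show ?thesis unfolding a_def by simp
qed

lemma nn_integral_normal_density:
  assumes "\<sigma> > 0"
  shows "(\<integral>\<^sup>+x. ennreal (normal_density \<mu> \<sigma> x) \<partial>lborel) = 1"
  using assms by (subst nn_integral_eq_integral) (auto intro: integrable_normal_density)

lemma gauss_mgf:
  fixes \<sigma> t :: real
  assumes s: "\<sigma> > 0" and a: "1 - 2*t*\<sigma>\<^sup>2 > 0"
  shows "(\<integral>\<^sup>+x. ennreal (normal_density 0 \<sigma> x) * ennreal (exp (t * x\<^sup>2)) \<partial>lborel)
       = ennreal (1 / sqrt (1 - 2*t*\<sigma>\<^sup>2))"
proof -
  have "(\<integral>\<^sup>+x. ennreal (normal_density 0 \<sigma> x) * ennreal (exp (t * x\<^sup>2)) \<partial>lborel)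
      = (\<integral>\<^sup>+x. ennreal (1 / sqrt (1 - 2*t*\<sigma>\<^sup>2)) * ennreal (normal_density 0 (\<sigma> / sqrt (1 - 2*t*\<sigma>\<^sup>2)) x) \<partial>lborel)"
    apply (intro nn_integral_cong)
    apply (subst ennreal_mult[symmetric], simp, simp)
    apply (simp only: gauss_pointwise[OF s a])
    apply (rule ennreal_mult)
    using a by auto
  also have "\<dots> = ennreal (1 / sqrt (1 - 2*t*\<sigma>\<^sup>2))"
    using s a by (subst nn_integral_cmult) (auto simp: nn_integral_normal_density)
  finally show ?thesis .
qed

lemma mgf_Y:
  fixes v :: "real^'n::finite" and t :: real
  assumes v: "v \<noteq> 0" and a: "1 - 2*t*(norm v)\<^sup>2 > 0"
  shows "(\<integral>\<^sup>+f. ennreal (exp (t * (norm (mat_of f *v v))\<^sup>2)) \<partial>(gauss_matrix::('d::finite\<times>'n\<Rightarrow>real) measure))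
       = ennreal ((1 / sqrt (1 - 2*t*(norm v)\<^sup>2)) ^ CARD('d))"
proof -
  interpret prob_space "gauss_matrix::('d\<times>'n\<Rightarrow>real) measure" by (rule prob_gauss)
  define X where "X = (\<lambda>(i::'d) (f::'d\<times>'n\<Rightarrow>real). exp (t * (\<Sum>j\<in>UNIV. f (i,j) * v $ j)\<^sup>2))"
  have ind1: "indep_vars (\<lambda>i. PiM ({i}\<times>UNIV) (\<lambda>_. N0)) (\<lambda>i f. restrict f ({i}\<times>UNIV)) (UNIV::'d set)"
    using indep_vars_restrict[OF coord_indep[where 'd='d and 'n='n], of UNIV "\<lambda>i. {i}\<times>UNIV"]
    by (auto simp: disjoint_family_on_def)
  have meas: "(\<lambda>g. exp (t * (\<Sum>j\<in>UNIV. g (i,j) * v $ j)\<^sup>2)) \<in> borel_measurable (PiM ({i}\<times>UNIV) (\<lambda>_. N0))" for i :: 'd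
  proof -
    have "(\<lambda>g. g (i,j)) \<in> borel_measurable (PiM ({i}\<times>UNIV) (\<lambda>_. N0))" for j
      using measurable_component_singleton[of "(i,j)" "{i}\<times>UNIV" "\<lambda>_. N0"]
      unfolding measurable_cong_sets[OF refl sets_N0] by simp
    then show ?thesis by measurable
  qed
  have ind0: "indep_vars (\<lambda>_. borel) (\<lambda>i x. (\<lambda>g. exp (t * (\<Sum>j\<in>UNIV. g (i,j) * v $ j)\<^sup>2)) (restrict x ({i}\<times>UNIV))) UNIV"
    by (rule indep_vars_compose2[OF ind1 meas])
  have eqX: "(\<lambda>i x. (\<lambda>g. exp (t * (\<Sum>j\<in>UNIV. g (i,j) * v $ j)\<^sup>2)) (restrict x ({i}\<times>UNIV))) = X"
    unfolding X_def by (intro ext) simp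
  have ind: "indep_vars (\<lambda>_. borel) X UNIV" using ind0 unfolding eqX .
  have Xnn: "\<And>i f. i \<in> UNIV \<Longrightarrow> 0 \<le> X i f" unfolding X_def by simp
  have each: "(\<integral>\<^sup>+f. ennreal (X i f) \<partial>(gauss_matrix::('d\<times>'n\<Rightarrow>real) measure)) = ennreal (1 / sqrt (1 - 2*t*(norm v)\<^sup>2))" for i
  proof -
    have "(\<integral>\<^sup>+f. ennreal (X i f) \<partial>(gauss_matrix::('d\<times>'n\<Rightarrow>real) measure))
        = (\<integral>\<^sup>+x. ennreal (normal_density 0 (norm v) x) * ennreal (exp (t * x\<^sup>2)) \<partial>lborel)"
      unfolding X_def
      using distributed_nn_integral[OF row_distr[OF v, of i], of "\<lambda>x. ennreal (exp (t * x\<^sup>2))"]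
      by simp
    also have "\<dots> = ennreal (1 / sqrt (1 - 2*t*(norm v)\<^sup>2))"
      by (rule gauss_mgf) (use v a in auto)
    finally show ?thesis .
  qed
  have eqE: "(\<lambda>f. ennreal (exp (t * (norm (mat_of f *v v))\<^sup>2))) = (\<lambda>f. ennreal (\<Prod>i\<in>UNIV. X i f))"
    unfolding norm_sq_mat X_def by (simp add: sum_distrib_left exp_sum)
  have "(\<integral>\<^sup>+f. ennreal (exp (t * (norm (mat_of f *v v))\<^sup>2)) \<partial>(gauss_matrix::('d::finite\<times>'n\<Rightarrow>real) measure))
      = (\<Prod>i\<in>UNIV. \<integral>\<^sup>+f. ennreal (X i f) \<partial>(gauss_matrix::('d\<times>'n\<Rightarrow>real) measure))"
  proof -
    have "(\<integral>\<^sup>+f. (\<Prod>i\<in>UNIV. ennreal (X i f)) \<partial>(gauss_matrix::('d\<times>'n\<Rightarrow>real) measure))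
      = (\<Prod>i\<in>UNIV. \<integral>\<^sup>+f. ennreal (X i f) \<partial>(gauss_matrix::('d\<times>'n\<Rightarrow>real) measure))"
      by (rule indep_vars_nn_integral) (use indep_vars_compose2[OF ind, where Y="\<lambda>_ x. ennreal x" and N="\<lambda>_. borel"] in auto)
    then show ?thesis using Xnn by (simp add: eqE prod_ennreal)
  qed
  also have "\<dots> = ennreal ((1 / sqrt (1 - 2*t*(norm v)\<^sup>2)) ^ CARD('d))"
    by (simp add: each, rule ennreal_power) (use a in simp)
  finally show ?thesis .
qed

lemma pow_sqrt_exp:
  fixes b :: real assumes "b > 0"
  shows "sqrt b ^ k = exp (real k / 2 * ln b)"
proof -
  have "sqrt b = exp (ln b / 2)" using assms by (simp add: ln_sqrt[symmetric])
  then have "sqrt b ^ k = exp (ln b / 2) ^ k" by simp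
  also have "\<dots> = exp (real k * (ln b / 2))" by (rule exp_of_nat_mult[symmetric])
  finally show ?thesis by simp
qed

lemma upper_tail:
  fixes v :: "real^'n::finite" and \<tau> :: real
  assumes t: "\<tau> > 0"
  defines "M \<equiv> (gauss_matrix::('d::finite\<times>'n\<Rightarrow>real) measure)"
  shows "measure M {f \<in> space M. (norm (mat_of f *v v))\<^sup>2 > (1 + \<tau>) * real CARD('d) * (norm v)\<^sup>2}
         \<le> exp (- real CARD('d) / 2 * (\<tau> - ln (1 + \<tau>)))"
proof (cases "v = 0")
  case True
  then show ?thesis by simp
next
  case False
  interpret prob_space M unfolding M_def by (rule prob_gauss)
  define d where "d = real CARD('d)"
  define \<sigma>2 where "\<sigma>2 = (norm v)\<^sup>2"
  have s2: "\<sigma>2 > 0" using False by (simp add: \<sigma>2_def)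
  define s where "s = (\<tau> / (1 + \<tau>)) / (2 * \<sigma>2)"
  have s0: "s > 0" using s2 t by (simp add: s_def)
  have a1: "2 * s * \<sigma>2 = \<tau> / (1 + \<tau>)"
  proof -
    have "1 + \<tau> \<noteq> 0" "\<sigma>2 \<noteq> 0" using s2 t by auto
    then show ?thesis unfolding s_def by simp
  qed
  have a: "1 - 2 * s * (norm v)\<^sup>2 = 1 / (1 + \<tau>)"
    using a1 t unfolding \<sigma>2_def[symmetric] by (simp add: field_simps)
  have "emeasure M {f \<in> space M. (norm (mat_of f *v v))\<^sup>2 \<ge> (1 + \<tau>) * d * \<sigma>2}
      \<le> ennreal (exp (-s * ((1 + \<tau>) * d * \<sigma>2))) *
         (\<integral>\<^sup>+f. ennreal (exp (s * (norm (mat_of f *v v))\<^sup>2)) * indicator (space M) f \<partial>M)"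
    by (rule Chernoff_ineq_nn_integral_ge[OF s0]) (auto simp: M_def)
  also have "(\<integral>\<^sup>+f. ennreal (exp (s * (norm (mat_of f *v v))\<^sup>2)) * indicator (space M) f \<partial>M)
      = (\<integral>\<^sup>+f. ennreal (exp (s * (norm (mat_of f *v v))\<^sup>2)) \<partial>M)"
    by (intro nn_integral_cong) simp
  also have "\<dots> = ennreal ((1 / sqrt (1 - 2 * s * (norm v)\<^sup>2)) ^ CARD('d))"
    unfolding M_def by (rule mgf_Y[OF False]) (use a t in simp)
  also have "ennreal (exp (-s * ((1 + \<tau>) * d * \<sigma>2))) * \<dots>
      = ennreal (exp (- d / 2 * (\<tau> - ln (1 + \<tau>))))"
  proof -
    have e1: "(1 / sqrt (1 - 2 * s * (norm v)\<^sup>2)) ^ CARD('d) = exp (d / 2 * ln (1 + \<tau>))"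
      unfolding a using t by (simp add: real_sqrt_divide pow_sqrt_exp d_def)
    have e2: "-s * ((1 + \<tau>) * d * \<sigma>2) = - d / 2 * \<tau>"
    proof -
      have "-s * ((1 + \<tau>) * d * \<sigma>2) = -(2 * s * \<sigma>2) * (1 + \<tau>) * d / 2" by (simp add: algebra_simps)
      also have "\<dots> = - d / 2 * \<tau>" unfolding a1 using t by (simp add: field_simps)
      finally show ?thesis .
    qed
    have "exp (-s * ((1 + \<tau>) * d * \<sigma>2)) * (1 / sqrt (1 - 2 * s * (norm v)\<^sup>2)) ^ CARD('d)
        = exp (- d / 2 * (\<tau> - ln (1 + \<tau>)))"
      unfolding e1 e2 by (simp add: exp_add[symmetric] algebra_simps)
    then show ?thesis by (subst ennreal_mult[symmetric]) (auto simp: e1)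
  qed
  finally have "measure M {f \<in> space M. (norm (mat_of f *v v))\<^sup>2 \<ge> (1 + \<tau>) * d * \<sigma>2}
      \<le> exp (- d / 2 * (\<tau> - ln (1 + \<tau>)))"
    by (simp add: emeasure_eq_measure)
  moreover have "measure M {f \<in> space M. (norm (mat_of f *v v))\<^sup>2 > (1 + \<tau>) * d * \<sigma>2}
      \<le> measure M {f \<in> space M. (norm (mat_of f *v v))\<^sup>2 \<ge> (1 + \<tau>) * d * \<sigma>2}"
    by (rule finite_measure_mono) (auto simp: M_def)
  ultimately show ?thesis unfolding d_def \<sigma>2_def by simp
qed

lemma lower_tail:
  fixes v :: "real^'n::finite" and \<tau> :: real
  assumes t: "\<tau> > 0" "\<tau> < 1" and v: "v \<noteq> 0"
  defines "M \<equiv> (gauss_matrix::('d::finite\<times>'n\<Rightarrow>real) measure)"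
  shows "measure M {f \<in> space M. (norm (mat_of f *v v))\<^sup>2 \<le> (1 - \<tau>) * real CARD('d) * (norm v)\<^sup>2}
         \<le> exp (real CARD('d) / 2 * (\<tau> + ln (1 - \<tau>)))"
proof -
  interpret prob_space M unfolding M_def by (rule prob_gauss)
  define d where "d = real CARD('d)"
  define \<sigma>2 where "\<sigma>2 = (norm v)\<^sup>2"
  have s2: "\<sigma>2 > 0" using v by (simp add: \<sigma>2_def)
  define s where "s = (\<tau> / (1 - \<tau>)) / (2 * \<sigma>2)"
  have s0: "s > 0" using s2 t by (simp add: s_def)
  have a1: "2 * s * \<sigma>2 = \<tau> / (1 - \<tau>)"
    using s2 unfolding s_def by simp
  have a: "1 - 2 * (-s) * (norm v)\<^sup>2 = 1 / (1 - \<tau>)"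
  proof -
    have "1 - 2 * (-s) * (norm v)\<^sup>2 = 1 + 2 * s * \<sigma>2" by (simp add: \<sigma>2_def)
    also have "\<dots> = 1 / (1 - \<tau>)" unfolding a1 using t by (simp add: field_simps)
    finally show ?thesis .
  qed
  have "emeasure M {f \<in> space M. (norm (mat_of f *v v))\<^sup>2 \<le> (1 - \<tau>) * d * \<sigma>2}
      \<le> ennreal (exp (s * ((1 - \<tau>) * d * \<sigma>2))) *
         (\<integral>\<^sup>+f. ennreal (exp (-s * (norm (mat_of f *v v))\<^sup>2)) * indicator (space M) f \<partial>M)"
    by (rule Chernoff_ineq_nn_integral_le[OF s0]) (auto simp: M_def)
  also have "(\<integral>\<^sup>+f. ennreal (exp (-s * (norm (mat_of f *v v))\<^sup>2)) * indicator (space M) f \<partial>M)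
      = (\<integral>\<^sup>+f. ennreal (exp ((-s) * (norm (mat_of f *v v))\<^sup>2)) \<partial>M)"
    by (intro nn_integral_cong) simp
  also have "\<dots> = ennreal ((1 / sqrt (1 - 2 * (-s) * (norm v)\<^sup>2)) ^ CARD('d))"
    unfolding M_def by (rule mgf_Y[OF v]) (use a t in simp)
  also have "ennreal (exp (s * ((1 - \<tau>) * d * \<sigma>2))) * \<dots>
      = ennreal (exp (d / 2 * (\<tau> + ln (1 - \<tau>))))"
  proof -
    have e1: "(1 / sqrt (1 - 2 * (-s) * (norm v)\<^sup>2)) ^ CARD('d) = exp (d / 2 * ln (1 - \<tau>))"
      unfolding a using t by (simp add: real_sqrt_divide pow_sqrt_exp d_def)
    have e2: "s * ((1 - \<tau>) * d * \<sigma>2) = d / 2 * \<tau>"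
    proof -
      have "s * ((1 - \<tau>) * d * \<sigma>2) = (2 * s * \<sigma>2) * (1 - \<tau>) * d / 2" by (simp add: algebra_simps)
      also have "\<dots> = d / 2 * \<tau>" unfolding a1 using t by (simp add: field_simps)
      finally show ?thesis .
    qed
    have "exp (s * ((1 - \<tau>) * d * \<sigma>2)) * (1 / sqrt (1 - 2 * (-s) * (norm v)\<^sup>2)) ^ CARD('d)
        = exp (d / 2 * (\<tau> + ln (1 - \<tau>)))"
      unfolding e1 e2 by (simp add: exp_add[symmetric] algebra_simps)
    moreover have "0 \<le> (1 / sqrt (1 - 2 * (-s) * (norm v)\<^sup>2)) ^ CARD('d)"
      unfolding e1 by simp
    ultimately show ?thesis by (subst ennreal_mult[symmetric]) auto
  qed
  finally have "measure M {f \<in> space M. (norm (mat_of f *v v))\<^sup>2 \<le> (1 - \<tau>) * d * \<sigma>2}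
      \<le> exp (d / 2 * (\<tau> + ln (1 - \<tau>)))"
    by (simp add: emeasure_eq_measure)
  then show ?thesis unfolding d_def \<sigma>2_def by simp
qed

theorem theorem1:
  fixes Q :: "(real^'n) set" and E :: "real^'n \<Rightarrow> nat" and D :: "nat \<Rightarrow> real^'n"
    and r :: nat and x\<^sub>o :: "real^'n" and \<tau>\<^sub>1 \<tau>\<^sub>2 :: real
  assumes "compact Q"
    and "\<forall>x\<in>Q. E x \<in> {1..2^r}"
    and "x\<^sub>o \<in> Q"
    and "\<tau>\<^sub>1 > 0" and "0 < \<tau>\<^sub>2" and "\<tau>\<^sub>2 < 1"
  shows "let C = codebook Q E D; \<delta> = distortion Q E D; d = real CARD('d);
             M = (gauss_matrix :: ('d::finite \<times> 'n \<Rightarrow> real) measure);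
             ev = {f \<in> space M. \<forall>c. csp_minimizer (mat_of f) (mat_of f *v x\<^sub>o) C c \<longrightarrow>
                     norm (c - x\<^sub>o) \<le> \<delta> * sqrt ((1 + \<tau>\<^sub>1) / (1 - \<tau>\<^sub>2))}
         in ev \<in> sets M \<and>
            measure M ev \<ge> 1 - 2^r * exp (d / 2 * (\<tau>\<^sub>2 + ln (1 - \<tau>\<^sub>2)))
                               - exp (- d / 2 * (\<tau>\<^sub>1 - ln (1 + \<tau>\<^sub>1)))"
proof -
  note cQ = assms(1) and EQ = assms(2) and xQ = assms(3) and t1 = assms(4) and t2 = assms(5,6)
  define C where "C = codebook Q E D"
  define \<delta> where "\<delta> = distortion Q E D"
  define d where "d = real CARD('d)"
  define M where "M = (gauss_matrix :: ('d::finite \<times> 'n \<Rightarrow> real) measure)"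
  define K where "K = sqrt ((1 + \<tau>\<^sub>1) / (1 - \<tau>\<^sub>2))"
  define ev where "ev = {f \<in> space M. \<forall>c. csp_minimizer (mat_of f) (mat_of f *v x\<^sub>o) C c \<longrightarrow>
                     norm (c - x\<^sub>o) \<le> \<delta> * K}"
  define Y where "Y = (\<lambda>w (f::'d \<times> 'n \<Rightarrow> real). (norm (mat_of f *v w))\<^sup>2)"
  interpret prob_space M unfolding M_def by (rule prob_gauss)
  have Ymeas[measurable]: "Y w \<in> borel_measurable M" for w unfolding Y_def M_def by (rule meas_Y)
  have d0: "d > 0" unfolding d_def by simp
  have K0: "K \<ge> 0" unfolding K_def using t1 t2 by simp
  have Csub: "C \<subseteq> D ` {1..2^r}" unfolding C_def codebook_def using EQ by auto
  have Cfin: "finite C" using Csub finite_subset by blast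
  have Ccard: "card C \<le> 2^r"
  proof -
    have "card C \<le> card (D ` {1..2^r})" using Csub by (intro card_mono) auto
    also have "\<dots> \<le> card {1..(2::nat)^r}" by (rule card_image_le) simp
    finally show ?thesis by simp
  qed
  define xt where "xt = D (E x\<^sub>o)"
  have xtC: "xt \<in> C" unfolding xt_def C_def codebook_def using xQ by auto
  have dist: "norm (x\<^sub>o - xt) \<le> \<delta>"
  proof -
    obtain B where B: "\<forall>x\<in>Q. norm x \<le> B" using compact_imp_bounded[OF cQ] bounded_iff by blast
    have "norm (x - D (E x)) \<le> B + (\<Sum>k\<in>{1..2^r}. norm (D k))" if "x \<in> Q" for x
    proof -
      have "norm (D (E x)) \<le> (\<Sum>k\<in>{1..2^r}. norm (D k))"
        using EQ that by (intro member_le_sum) auto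
      then show ?thesis using B that norm_triangle_ineq4[of x "D (E x)"] by fastforce
    qed
    then have "bdd_above ((\<lambda>x. norm (x - D (E x))) ` Q)" by (intro bdd_aboveI2) blast
    then show ?thesis unfolding \<delta>_def distortion_def xt_def by (rule cSUP_upper[OF xQ])
  qed
  have \<delta>0: "\<delta> \<ge> 0" using dist norm_ge_zero order_trans by blast
  define B1 where "B1 = (\<Union>c\<in>C - {x\<^sub>o}. {f \<in> space M. Y (c - x\<^sub>o) f \<le> (1 - \<tau>\<^sub>2) * d * (norm (c - x\<^sub>o))\<^sup>2})"
  define B2 where "B2 = {f \<in> space M. Y (xt - x\<^sub>o) f > (1 + \<tau>\<^sub>1) * d * (norm (xt - x\<^sub>o))\<^sup>2}"
  have B1s: "B1 \<in> sets M" unfolding B1_def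
  proof (rule sets.finite_UN)
    show "finite (C - {x\<^sub>o})" using Cfin by simp
    fix c show "{f \<in> space M. Y (c - x\<^sub>o) f \<le> (1 - \<tau>\<^sub>2) * d * (norm (c - x\<^sub>o))\<^sup>2} \<in> sets M"
      by measurable
  qed
  have B2s: "B2 \<in> sets M" unfolding B2_def by measurable
  have pB1: "prob B1 \<le> 2^r * exp (d / 2 * (\<tau>\<^sub>2 + ln (1 - \<tau>\<^sub>2)))"
  proof -
    have "prob B1 \<le> (\<Sum>c\<in>C - {x\<^sub>o}. prob {f \<in> space M. Y (c - x\<^sub>o) f \<le> (1 - \<tau>\<^sub>2) * d * (norm (c - x\<^sub>o))\<^sup>2})"
      unfolding B1_def using Cfin by (intro finite_measure_subadditive_finite) auto
    also have "\<dots> \<le> (\<Sum>c\<in>C - {x\<^sub>o}. exp (d / 2 * (\<tau>\<^sub>2 + ln (1 - \<tau>\<^sub>2))))"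
    proof (intro sum_mono)
      fix c assume "c \<in> C - {x\<^sub>o}"
      then have "c - x\<^sub>o \<noteq> 0" by auto
      from lower_tail[OF t2 this, where 'd='d]
      show "prob {f \<in> space M. Y (c - x\<^sub>o) f \<le> (1 - \<tau>\<^sub>2) * d * (norm (c - x\<^sub>o))\<^sup>2}
          \<le> exp (d / 2 * (\<tau>\<^sub>2 + ln (1 - \<tau>\<^sub>2)))"
        unfolding M_def Y_def d_def .
    qed
    also have "\<dots> = real (card (C - {x\<^sub>o})) * exp (d / 2 * (\<tau>\<^sub>2 + ln (1 - \<tau>\<^sub>2)))" by simp
    also have "\<dots> \<le> 2^r * exp (d / 2 * (\<tau>\<^sub>2 + ln (1 - \<tau>\<^sub>2)))"
    proof (rule mult_right_mono)
      have "card (C - {x\<^sub>o}) \<le> card C" using Cfin by (intro card_mono) auto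
      then have "card (C - {x\<^sub>o}) \<le> 2^r" using Ccard by linarith
      then show "real (card (C - {x\<^sub>o})) \<le> 2^r" by (metis of_nat_le_iff of_nat_numeral of_nat_power)
    qed simp
    finally show ?thesis .
  qed
  have pB2: "prob B2 \<le> exp (- d / 2 * (\<tau>\<^sub>1 - ln (1 + \<tau>\<^sub>1)))"
    using upper_tail[OF t1, of "xt - x\<^sub>o", where 'd='d]
    unfolding B2_def M_def Y_def d_def .
  have sub: "space M - (B1 \<union> B2) \<subseteq> ev"
  proof
    fix f assume f: "f \<in> space M - (B1 \<union> B2)"
    show "f \<in> ev" unfolding ev_def
    proof (intro CollectI conjI allI impI)
      show "f \<in> space M" using f by auto
      fix c assume mc: "csp_minimizer (mat_of f) (mat_of f *v x\<^sub>o) C c"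
      show "norm (c - x\<^sub>o) \<le> \<delta> * K"
      proof (cases "c = x\<^sub>o")
        case True then show ?thesis using \<delta>0 K0 by simp
      next
        case False
        have cC: "c \<in> C" using mc unfolding csp_minimizer_def by auto
        have eqn: "norm (mat_of f *v x\<^sub>o - mat_of f *v w) = norm (mat_of f *v (w - x\<^sub>o))" for w
          by (simp add: matrix_vector_mult_diff_distrib norm_minus_commute)
        have "(norm (mat_of f *v x\<^sub>o - mat_of f *v c))\<^sup>2 \<le> (norm (mat_of f *v x\<^sub>o - mat_of f *v xt))\<^sup>2"
          using mc xtC unfolding csp_minimizer_def by auto
        then have m: "Y (c - x\<^sub>o) f \<le> Y (xt - x\<^sub>o) f" unfolding Y_def eqn .
        have l: "Y (c - x\<^sub>o) f > (1 - \<tau>\<^sub>2) * d * (norm (c - x\<^sub>o))\<^sup>2"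
        proof -
          have "c \<in> C - {x\<^sub>o}" using False cC by simp
          then have "f \<notin> {f \<in> space M. Y (c - x\<^sub>o) f \<le> (1 - \<tau>\<^sub>2) * d * (norm (c - x\<^sub>o))\<^sup>2}"
            using f unfolding B1_def by blast
          then show ?thesis using f by auto
        qed
        have u: "Y (xt - x\<^sub>o) f \<le> (1 + \<tau>\<^sub>1) * d * (norm (xt - x\<^sub>o))\<^sup>2"
          using f unfolding B2_def by auto
        have dd: "(norm (xt - x\<^sub>o))\<^sup>2 \<le> \<delta>\<^sup>2"
          using dist by (simp add: norm_minus_commute power_mono)
        have "d * ((1 - \<tau>\<^sub>2) * (norm (c - x\<^sub>o))\<^sup>2) \<le> d * ((1 + \<tau>\<^sub>1) * \<delta>\<^sup>2)"
        proof -
          have "(1 + \<tau>\<^sub>1) * d * (norm (xt - x\<^sub>o))\<^sup>2 \<le> (1 + \<tau>\<^sub>1) * d * \<delta>\<^sup>2"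
            using dd t1 d0 by (intro mult_left_mono) auto
          then have "(1 - \<tau>\<^sub>2) * d * (norm (c - x\<^sub>o))\<^sup>2 \<le> (1 + \<tau>\<^sub>1) * d * \<delta>\<^sup>2"
            using l m u by linarith
          then show ?thesis by (simp only: mult_ac)
        qed
        then have "(1 - \<tau>\<^sub>2) * (norm (c - x\<^sub>o))\<^sup>2 \<le> (1 + \<tau>\<^sub>1) * \<delta>\<^sup>2" using d0 by simp
        then have "(norm (c - x\<^sub>o))\<^sup>2 \<le> (1 + \<tau>\<^sub>1) * \<delta>\<^sup>2 / (1 - \<tau>\<^sub>2)"
          using t2 by (simp add: pos_le_divide_eq mult.commute)
        also have "\<dots> = \<delta>\<^sup>2 * ((1 + \<tau>\<^sub>1) / (1 - \<tau>\<^sub>2))"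
          by (metis mult.commute times_divide_eq_right)
        also have "\<dots> = (\<delta> * K)\<^sup>2"
        proof -
          have X0: "(1 + \<tau>\<^sub>1) / (1 - \<tau>\<^sub>2) \<ge> 0" using t1 t2 by simp
          show ?thesis unfolding K_def power_mult_distrib real_sqrt_pow2[OF X0] ..
        qed
        finally have "(norm (c - x\<^sub>o))\<^sup>2 \<le> (\<delta> * K)\<^sup>2" .
        moreover have "0 \<le> \<delta> * K" using \<delta>0 K0 by simp
        ultimately show ?thesis by (rule power2_le_imp_le)
      qed
    qed
  qed
  have evs: "ev \<in> sets M"
  proof -
    have "ev = {f \<in> space M. \<forall>c\<in>C. (\<forall>c'\<in>C. Y (c - x\<^sub>o) f \<le> Y (c' - x\<^sub>o) f) \<longrightarrow> norm (c - x\<^sub>o) \<le> \<delta> * K}"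
    proof -
      have eqn: "(norm (mat_of f *v x\<^sub>o - mat_of f *v w))\<^sup>2 = Y (w - x\<^sub>o) f" for w f
        unfolding Y_def by (simp add: matrix_vector_mult_diff_distrib norm_minus_commute)
      show ?thesis unfolding ev_def csp_minimizer_def eqn by blast
    qed
    also have "\<dots> \<in> sets M"
    proof -
      have [measurable]: "Measurable.pred M (\<lambda>x. Y (c - x\<^sub>o) x \<le> Y (c' - x\<^sub>o) x)" for c c'
        unfolding pred_def by (rule borel_measurable_le) (rule Ymeas)+
      have [measurable]: "Measurable.pred M (\<lambda>x. norm (c - x\<^sub>o) \<le> \<delta> * K)" for c
        by simp
      show ?thesis using Cfin by measurable
    qed
    finally show ?thesis .
  qed
  have "prob ev \<ge> 1 - 2^r * exp (d / 2 * (\<tau>\<^sub>2 + ln (1 - \<tau>\<^sub>2))) - exp (- d / 2 * (\<tau>\<^sub>1 - ln (1 + \<tau>\<^sub>1)))"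
  proof -
    have "prob (B1 \<union> B2) \<le> prob B1 + prob B2" by (rule measure_Un_le[OF B1s B2s])
    moreover have "prob (space M - (B1 \<union> B2)) = 1 - prob (B1 \<union> B2)"
      using B1s B2s by (intro prob_compl) auto
    moreover have "prob (space M - (B1 \<union> B2)) \<le> prob ev"
      using sub evs by (intro finite_measure_mono) auto
    ultimately show ?thesis using pB1 pB2 by linarith
  qed
  then show ?thesis
    using evs unfolding Let_def C_def[symmetric] \<delta>_def[symmetric] d_def[symmetric] M_def[symmetric]
      K_def[symmetric] ev_def[symmetric] by simp
qed

end
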